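(* $\eta^{(1)}=\frac nN$. Moreover, for an $(N,n)$ dual pair $(F,G)$ for $\mathcal H$: (i) $(F,G)\in\mathcal N^{(1)}$ if and only if $\|f_i\|\,\|g_i\|=\frac nN$ for all $1\le i\le N$; (ii) if $(F,G)\in\mathcal N^{(1)}$, then $\langle f_i,g_i\rangle=\frac nN$ for all $1\le i\le N$; the converse does not hold in general.
   Context: $\mathcal H$ is a complex Hilbert space of finite dimension $n$, inner product linear in the first argument, $N\ge n$. A finite sequence $F=\{f_i\}_{i=1}^N$ is a frame if there are $0<A\le B$ with $A\|f\|^2\le\sum_i|\langle f,f_i\rangle|^2\le B\|f\|^2$ for all $f$. $G=\{g_i\}_{i=1}^N$ is a dual of $F$ if $f=\sum_i\langle f,g_i\rangle f_i$ for all $f$; $(F,G)$ is then an $(N,n)$ dual pair. $E_{\Lambda,F,G}f=\sum_{i\in\Lambda}\langle f,f_i\rangle g_i$ for $\Lambda\subseteq\{1,\dots,N\}$. The numerical radius is $\omega(T)=\sup\{|\langle Tf,f\rangle|:\|f\|=1\}$; $\eta^{(1)}_{F,G}=\max_{1\le i\le N}\omega(E_{\{i\},F,G})$; $\eta^{(1)}=\inf\{\eta^{(1)}_{F,G}:(F,G)\text{ an }(N,n)\text{ dual pair}\}$; $\mathcal N^{(1)}=\{(F,G):\eta^{(1)}_{F,G}=\eta^{(1)}\}$. *)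

theory Defs
  imports Complex_Main "Jordan_Normal_Form.Matrix"
begin

text \<open>The n-dimensional complex Hilbert space is modelled as carrier_vec n (complex column
vectors of length n) with the standard inner product  f \<bullet>c g = sum_j f_j * cnj (g_j),
which is linear in the first argument.  Frame sequences are indexed by {1..N}.\<close>

definition ip :: "complex vec \<Rightarrow> complex vec \<Rightarrow> complex" where
  "ip f g = f \<bullet>c g"

definition vnorm :: "complex vec \<Rightarrow> real" where
  "vnorm f = sqrt (Re (ip f f))"

definition is_frame :: "nat \<Rightarrow> nat \<Rightarrow> (nat \<Rightarrow> complex vec) \<Rightarrow> bool" where
  "is_frame n N F \<longleftrightarrow> (\<forall>i\<in>{1..N}. F i \<in> carrier_vec n) \<and>
     (\<exists>A B. 0 < A \<and> A \<le> B \<and>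
        (\<forall>f\<in>carrier_vec n.
           A * (vnorm f)\<^sup>2 \<le> (\<Sum>i\<in>{1..N}. (cmod (ip f (F i)))\<^sup>2) \<and>
           (\<Sum>i\<in>{1..N}. (cmod (ip f (F i)))\<^sup>2) \<le> B * (vnorm f)\<^sup>2))"

definition is_dual :: "nat \<Rightarrow> nat \<Rightarrow> (nat \<Rightarrow> complex vec) \<Rightarrow> (nat \<Rightarrow> complex vec) \<Rightarrow> bool" where
  "is_dual n N F G \<longleftrightarrow> (\<forall>i\<in>{1..N}. G i \<in> carrier_vec n) \<and>
     (\<forall>f\<in>carrier_vec n.
        f = finsum_vec TYPE(complex) n (\<lambda>i. ip f (G i) \<cdot>\<^sub>v F i) {1..N})"

definition dual_pair :: "nat \<Rightarrow> nat \<Rightarrow> (nat \<Rightarrow> complex vec) \<Rightarrow> (nat \<Rightarrow> complex vec) \<Rightarrow> bool" where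
  "dual_pair n N F G \<longleftrightarrow> is_frame n N F \<and> is_dual n N F G"

definition E_op :: "nat \<Rightarrow> nat set \<Rightarrow> (nat \<Rightarrow> complex vec) \<Rightarrow> (nat \<Rightarrow> complex vec)
    \<Rightarrow> complex vec \<Rightarrow> complex vec" where
  "E_op n \<Lambda> F G f = finsum_vec TYPE(complex) n (\<lambda>i. ip f (F i) \<cdot>\<^sub>v G i) \<Lambda>"

definition num_radius :: "nat \<Rightarrow> (complex vec \<Rightarrow> complex vec) \<Rightarrow> real" where
  "num_radius n T = Sup {cmod (ip (T f) f) | f. f \<in> carrier_vec n \<and> vnorm f = 1}"

definition eta1_FG :: "nat \<Rightarrow> nat \<Rightarrow> (nat \<Rightarrow> complex vec) \<Rightarrow> (nat \<Rightarrow> complex vec) \<Rightarrow> real" where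
  "eta1_FG n N F G = Max {num_radius n (E_op n {i} F G) | i. i \<in> {1..N}}"

definition eta1 :: "nat \<Rightarrow> nat \<Rightarrow> real" where
  "eta1 n N = Inf {eta1_FG n N F G | F G. dual_pair n N F G}"

definition N1 :: "nat \<Rightarrow> nat \<Rightarrow> ((nat \<Rightarrow> complex vec) \<times> (nat \<Rightarrow> complex vec)) set" where
  "N1 n N = {(F, G). dual_pair n N F G \<and> eta1_FG n N F G = eta1 n N}"

end

theory Submission
  imports Defs "HOL-Analysis.L2_Norm"
begin

lemma ip_sum: "v \<in> carrier_vec n \<Longrightarrow> ip u v = (\<Sum>j<n. u$j * cnj (v$j))"
  unfolding ip_def scalar_prod_def by (auto intro!: sum.cong simp: lessThan_atLeast0)

lemma ip_swap: "u \<in> carrier_vec n \<Longrightarrow> v \<in> carrier_vec n \<Longrightarrow> ip v u = cnj (ip u v)"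
  by (simp add: ip_sum mult.commute)

lemma ip_self: "v \<in> carrier_vec n \<Longrightarrow> ip v v = complex_of_real ((vnorm v)\<^sup>2)"
proof -
  assume v: "v \<in> carrier_vec n"
  have "ip v v = (\<Sum>j<n. complex_of_real ((cmod (v$j))\<^sup>2))"
    unfolding ip_sum[OF v] by (rule sum.cong, simp, simp only: complex_norm_square)
  also have "\<dots> = complex_of_real (\<Sum>j<n. (cmod (v$j))\<^sup>2)" by simp
  finally have e: "ip v v = complex_of_real (\<Sum>j<n. (cmod (v$j))\<^sup>2)" .
  have "(vnorm v)\<^sup>2 = (\<Sum>j<n. (cmod (v$j))\<^sup>2)"
    unfolding vnorm_def e by (simp add: sum_nonneg del: of_real_sum)
  with e show ?thesis by simp
qed

lemma vnorm_L2: "v \<in> carrier_vec n \<Longrightarrow> vnorm v = L2_set (\<lambda>j. cmod (v$j)) {..<n}"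
proof -
  assume v: "v \<in> carrier_vec n"
  have "ip v v = (\<Sum>j<n. complex_of_real ((cmod (v$j))\<^sup>2))"
    unfolding ip_sum[OF v] by (rule sum.cong, simp, simp only: complex_norm_square)
  also have "\<dots> = complex_of_real (\<Sum>j<n. (cmod (v$j))\<^sup>2)" by simp
  finally have "Re (ip v v) = (\<Sum>j<n. (cmod (v$j))\<^sup>2)" by (simp del: of_real_sum)
  then show ?thesis unfolding vnorm_def L2_set_def by simp
qed

lemma vnorm_nonneg: "vnorm v \<ge> 0"
proof -
  have v: "v \<in> carrier_vec (dim_vec v)" by (rule carrier_vec_dim_vec)
  show ?thesis unfolding vnorm_L2[OF v] by (rule L2_set_nonneg)
qed

lemma cauchy_schwarz: "u \<in> carrier_vec n \<Longrightarrow> v \<in> carrier_vec n \<Longrightarrow> cmod (ip u v) \<le> vnorm u * vnorm v"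
proof -
  assume u: "u \<in> carrier_vec n" and v: "v \<in> carrier_vec n"
  have "cmod (ip u v) \<le> (\<Sum>j<n. cmod (u$j * cnj (v$j)))"
    unfolding ip_sum[OF v] by (rule norm_sum)
  also have "\<dots> = (\<Sum>j<n. \<bar>cmod (u$j)\<bar> * \<bar>cmod (v$j)\<bar>)" by (simp add: norm_mult)
  also have "\<dots> \<le> vnorm u * vnorm v"
    unfolding vnorm_L2[OF u] vnorm_L2[OF v] by (rule L2_set_mult_ineq)
  finally show ?thesis .
qed

lemma ip_smult_left: "v \<in> carrier_vec n \<Longrightarrow> u \<in> carrier_vec n \<Longrightarrow> ip (c \<cdot>\<^sub>v u) v = c * ip u v"
  by (simp add: ip_sum sum_distrib_left mult.assoc)

lemma ip_smult_right: "v \<in> carrier_vec n \<Longrightarrow> u \<in> carrier_vec n \<Longrightarrow> ip u (c \<cdot>\<^sub>v v) = cnj c * ip u v"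
  by (simp add: ip_sum sum_distrib_left algebra_simps)

lemma ip_add_left: "v \<in> carrier_vec n \<Longrightarrow> u \<in> carrier_vec n \<Longrightarrow> w \<in> carrier_vec n \<Longrightarrow>
   ip (u + w) v = ip u v + ip w v"
  by (simp add: ip_sum sum.distrib algebra_simps)

lemma ip_add_right: "v \<in> carrier_vec n \<Longrightarrow> u \<in> carrier_vec n \<Longrightarrow> w \<in> carrier_vec n \<Longrightarrow>
   ip v (u + w) = ip v u + ip v w"
proof -
  assume v: "v \<in> carrier_vec n" and u: "u \<in> carrier_vec n" and w: "w \<in> carrier_vec n"
  have uw: "u + w \<in> carrier_vec n" using u w by simp
  have "ip v (u + w) = (\<Sum>j<n. v$j * cnj (u$j) + v$j * cnj (w$j))"
    unfolding ip_sum[OF uw] by (rule sum.cong, simp) (use w in \<open>simp add: algebra_simps\<close>)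
  then show ?thesis by (simp add: ip_sum[OF u] ip_sum[OF w] sum.distrib)
qed

lemma finsum_index: "finite I \<Longrightarrow> (\<And>i. i \<in> I \<Longrightarrow> u i \<in> carrier_vec n) \<Longrightarrow> j < n \<Longrightarrow>
   finsum_vec TYPE(complex) n (\<lambda>i. c i \<cdot>\<^sub>v u i) I $ j = (\<Sum>i\<in>I. c i * u i $ j)"
  by (subst index_finsum_vec) (auto intro!: sum.cong, metis carrier_vecD index_smult_vec(1))

lemma finsum_carrier: "(\<And>i. i \<in> I \<Longrightarrow> u i \<in> carrier_vec n) \<Longrightarrow>
   finsum_vec TYPE(complex) n (\<lambda>i. c i \<cdot>\<^sub>v u i) I \<in> carrier_vec n"
  by (rule finsum_vec_closed) auto

lemma ip_finsum: "finite I \<Longrightarrow> (\<And>i. i \<in> I \<Longrightarrow> u i \<in> carrier_vec n) \<Longrightarrow> w \<in> carrier_vec n \<Longrightarrow>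
   ip (finsum_vec TYPE(complex) n (\<lambda>i. c i \<cdot>\<^sub>v u i) I) w = (\<Sum>i\<in>I. c i * ip (u i) w)"
  by (simp add: ip_sum finsum_index sum_distrib_left sum_distrib_right mult.assoc sum.swap[of _ I])

lemma E_single: "G i \<in> carrier_vec n \<Longrightarrow> E_op n {i} F G u = ip u (F i) \<cdot>\<^sub>v G i"
proof -
  assume g: "G i \<in> carrier_vec n"
  have fc: "finsum_vec TYPE(complex) n (\<lambda>k. ip u (F k) \<cdot>\<^sub>v G k) {i} \<in> carrier_vec n"
    by (rule finsum_carrier) (use g in auto)
  have ix: "\<And>j. j < n \<Longrightarrow> finsum_vec TYPE(complex) n (\<lambda>k. ip u (F k) \<cdot>\<^sub>v G k) {i} $ j = ip u (F i) * G i $ j"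
    by (subst finsum_index[where u=G and c="\<lambda>k. ip u (F k)"]) (use g in auto)
  show ?thesis unfolding E_op_def
    by (rule eq_vecI) (use fc g ix in auto)
qed

lemma vnorm_eq_iff: "v \<in> carrier_vec n \<Longrightarrow> Re (ip v v) = (vnorm v)\<^sup>2"
  by (simp add: ip_self[of v n])

lemma normalize_vec:
  assumes v: "v \<in> carrier_vec n" and x: "x \<in> carrier_vec n" and y: "y \<in> carrier_vec n"
    and pos: "vnorm v > 0"
  shows "\<exists>f\<in>carrier_vec n. vnorm f = 1 \<and> cmod (ip f x * ip y f) = cmod (ip v x * ip y v) / (vnorm v)\<^sup>2"
proof -
  define c where "c = complex_of_real (1 / vnorm v)"
  define f where "f = c \<cdot>\<^sub>v v"
  have f: "f \<in> carrier_vec n" unfolding f_def using v by simp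
  have cc: "cnj c = c" unfolding c_def by simp
  have "ip f f = c * c * ip v v" unfolding f_def using v
    by (simp add: ip_smult_left[of _ n] ip_smult_right[of _ n] cc)
  also have "\<dots> = 1" unfolding c_def ip_self[OF v] using pos
    by (simp add: field_simps power2_eq_square)
  finally have "ip f f = 1" .
  then have nf: "vnorm f = 1" unfolding vnorm_def by simp
  have "ip f x * ip y f = c * c * (ip v x * ip y v)" unfolding f_def using v x y
    by (simp add: ip_smult_left[of _ n] ip_smult_right[of _ n] cc)
  then have "cmod (ip f x * ip y f) = cmod (ip v x * ip y v) / (vnorm v)\<^sup>2"
    unfolding c_def using pos by (simp add: norm_mult norm_divide power2_eq_square)
  with f nf show ?thesis by blast
qed

lemma rank_one_lower:
  assumes x: "x \<in> carrier_vec n" and y: "y \<in> carrier_vec n" and pos: "vnorm x * vnorm y > 0"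
  shows "\<exists>f\<in>carrier_vec n. vnorm f = 1 \<and>
           cmod (ip f x * ip y f) = (cmod (ip y x) + vnorm x * vnorm y) / 2"
proof -
  define a where "a = vnorm x"
  define b where "b = vnorm y"
  define p where "p = ip y x"
  define r where "r = cmod p"
  define L where "L = (if p = 0 then 1 else cnj p / complex_of_real r)"
  have a0: "a > 0" and b0: "b > 0" using pos vnorm_nonneg[of x] vnorm_nonneg[of y]
    unfolding a_def b_def by (auto simp: zero_less_mult_iff)
  have r0: "r \<ge> 0" unfolding r_def by simp
  have Lp: "L * p = complex_of_real r"
  proof (cases "p = 0")
    case True then show ?thesis by (simp add: L_def r_def)
  next
    case False
    then have "r \<noteq> 0" unfolding r_def by simp
    then show ?thesis using False unfolding L_def r_def
      by (simp add: complex_norm_square[symmetric] field_simps power2_eq_square mult.commute)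
  qed
  have LL: "L * cnj L = 1"
  proof (cases "p = 0")
    case True then show ?thesis by (simp add: L_def)
  next
    case False
    then have "r \<noteq> 0" unfolding r_def by simp
    then show ?thesis using False unfolding L_def r_def
      by (simp add: complex_norm_square[symmetric] field_simps power2_eq_square)
  qed
  have cLp: "cnj L * cnj p = complex_of_real r" using arg_cong[OF Lp, of cnj] by simp
  have pL: "p = cnj L * complex_of_real r"
  proof -
    have "p = (L * cnj L) * p" using LL by simp
    also have "\<dots> = cnj L * (L * p)" by (simp add: algebra_simps)
    finally show ?thesis using Lp by simp
  qed
  have cmL: "cmod (cnj L) = 1"
  proof -
    have "cmod (L * cnj L) = 1" using LL by simp
    then have "cmod L * cmod L = 1" by (simp add: norm_mult)
    then have "(cmod L)\<^sup>2 = 1" by (simp add: power2_eq_square)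
    then have "cmod L = 1 \<or> cmod L = -1" by (simp add: power2_eq_1_iff)
    then show ?thesis using norm_ge_zero[of L] by auto
  qed
  have xx: "ip x x = complex_of_real (a*a)" unfolding a_def using ip_self[OF x] by (simp add: power2_eq_square)
  have yy: "ip y y = complex_of_real (b*b)" unfolding b_def using ip_self[OF y] by (simp add: power2_eq_square)
  have xy: "ip x y = cnj p" unfolding p_def using ip_swap[OF y x] by simp
  define v where "v = complex_of_real b \<cdot>\<^sub>v x + (L * complex_of_real a) \<cdot>\<^sub>v y"
  have v: "v \<in> carrier_vec n" unfolding v_def using x y by simp
  have vx: "ip v x = complex_of_real a * complex_of_real (a*b + r)"
  proof -
    have "ip v x = complex_of_real b * ip x x + (L * complex_of_real a) * ip y x"
      unfolding v_def using x y by (simp add: ip_add_left[of _ n] ip_smult_left[of _ n])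
    also have "\<dots> = complex_of_real b * complex_of_real (a*a) + complex_of_real a * (L * p)"
      unfolding xx p_def by (simp add: algebra_simps)
    finally show ?thesis unfolding Lp by (simp add: algebra_simps)
  qed
  have yv: "ip y v = cnj L * complex_of_real (b * (a*b + r))"
  proof -
    have "ip y v = complex_of_real b * ip y x + (cnj L * complex_of_real a) * ip y y"
      unfolding v_def using x y by (simp add: ip_add_right[of _ n] ip_smult_right[of _ n])
    also have "\<dots> = complex_of_real b * p + (cnj L * complex_of_real a) * complex_of_real (b*b)"
      unfolding yy p_def by simp
    also have "\<dots> = cnj L * complex_of_real (b * (a*b + r))"
      by (subst pL) (simp add: algebra_simps)
    finally show ?thesis .
  qed
  have xv: "ip x v = complex_of_real b * complex_of_real (a*a) + cnj L * complex_of_real a * cnj p"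
    unfolding v_def using x y by (simp add: ip_add_right[of _ n] ip_smult_right[of _ n] xx xy)
  have vv: "ip v v = complex_of_real (2 * (a*b) * (a*b + r))"
  proof -
    have "ip v v = complex_of_real b * ip x v + (L * complex_of_real a) * ip y v"
      unfolding v_def[of ] using x y v unfolding v_def
      by (simp add: ip_add_left[of _ n] ip_smult_left[of _ n])
    also have "\<dots> = complex_of_real b * (complex_of_real b * complex_of_real (a*a) + complex_of_real a * (cnj L * cnj p))
        + complex_of_real a * (L * cnj L) * complex_of_real (b * (a*b + r))"
      unfolding xv yv by (simp add: algebra_simps)
    also have "\<dots> = complex_of_real (2 * (a*b) * (a*b + r))"
      unfolding cLp LL by (simp add: algebra_simps)
    finally show ?thesis .
  qed
  have nv2: "(vnorm v)\<^sup>2 = 2 * (a*b) * (a*b + r)"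
    using vnorm_eq_iff[OF v] vv by simp
  have nvpos: "vnorm v > 0"
  proof -
    have "a*b > 0" using a0 b0 by simp
    then have "(vnorm v)\<^sup>2 > 0" unfolding nv2 using r0 by simp
    then show ?thesis using vnorm_nonneg[of v] by (metis less_eq_real_def power_zero_numeral zero_less_numeral)
  qed
  have "cmod (ip v x * ip y v) = a * (a*b + r) * (b * (a*b + r))"
  proof -
    have "a*b + r \<ge> 0" using a0 b0 r0 by simp
    then have "cmod (complex_of_real (a*b + r)) = a*b + r" by (simp only: norm_of_real abs_of_nonneg)
    then show ?thesis unfolding vx yv using a0 b0 r0 cmL by (simp only: norm_mult norm_of_real) simp
  qed
  then have val: "cmod (ip v x * ip y v) / (vnorm v)\<^sup>2 = (r + a*b) / 2"
  proof -
    have "a*b > 0" using a0 b0 by simp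
    moreover have "a*b + r > 0" using \<open>a*b > 0\<close> r0 by linarith
    ultimately have D: "2 * (a*b) * (a*b + r) \<noteq> 0" using a0 b0 by simp
    have "a * (a*b + r) * (b * (a*b + r)) = (r + a*b) * ((a*b) * (a*b + r))"
      by (simp add: algebra_simps)
    moreover have "(r + a*b) * ((a*b) * (a*b + r)) / (2 * (a*b) * (a*b + r)) = (r + a*b) / 2"
      using D by (simp add: field_simps)
    then show ?thesis unfolding nv2 \<open>cmod (ip v x * ip y v) = _\<close> using D by simp
  qed
  obtain f where "f \<in> carrier_vec n" "vnorm f = 1"
      "cmod (ip f x * ip y f) = cmod (ip v x * ip y v) / (vnorm v)\<^sup>2"
    using normalize_vec[OF v x y nvpos] by blast
  then show ?thesis using val unfolding r_def p_def a_def b_def by auto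
qed

lemma unit_vnorm: "0 < n \<Longrightarrow> vnorm (unit_vec n 0) = 1"
proof -
  assume n: "0 < n"
  have u: "unit_vec n 0 \<in> carrier_vec n" by simp
  have "(\<Sum>j<n. (cmod (unit_vec n 0 $ j))\<^sup>2) = (\<Sum>j<n. if j = 0 then 1 else 0)"
    by (rule sum.cong) (use n in auto)
  also have "\<dots> = 1" using n by simp
  finally show ?thesis unfolding vnorm_L2[OF u] L2_set_def by simp
qed

lemma num_radius_bounds:
  assumes n: "1 \<le> n" and x: "x \<in> carrier_vec n" and y: "y \<in> carrier_vec n"
  shows "(cmod (ip x y) + vnorm x * vnorm y) / 2 \<le> num_radius n (\<lambda>u. ip u x \<cdot>\<^sub>v y)"
    and "num_radius n (\<lambda>u. ip u x \<cdot>\<^sub>v y) \<le> vnorm x * vnorm y"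
proof -
  define S where "S = {cmod (ip (ip f x \<cdot>\<^sub>v y) f) | f. f \<in> carrier_vec n \<and> vnorm f = 1}"
  have S_eq: "S = {cmod (ip f x * ip y f) | f. f \<in> carrier_vec n \<and> vnorm f = 1}"
  proof -
    have eq: "\<And>f. f \<in> carrier_vec n \<Longrightarrow> ip (ip f x \<cdot>\<^sub>v y) f = ip f x * ip y f"
      using y by (simp add: ip_smult_left[of _ n])
    show ?thesis unfolding S_def by (auto simp: eq) (metis eq)
  qed
  have nr: "num_radius n (\<lambda>u. ip u x \<cdot>\<^sub>v y) = Sup S" unfolding num_radius_def S_def by simp
  have ub: "s \<le> vnorm x * vnorm y" if sS: "s \<in> S" for s
  proof -
    obtain f where f: "f \<in> carrier_vec n" "vnorm f = 1" and s: "s = cmod (ip f x * ip y f)"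
      using sS unfolding S_eq by blast
    have "s = cmod (ip f x) * cmod (ip y f)" unfolding s by (simp add: norm_mult)
    also have "\<dots> \<le> (vnorm f * vnorm x) * (vnorm y * vnorm f)"
      by (rule mult_mono) (use cauchy_schwarz[OF f(1) x] cauchy_schwarz[OF y f(1)] vnorm_nonneg in auto)
    finally show ?thesis using f by simp
  qed
  have ne: "cmod (ip (unit_vec n 0) x * ip y (unit_vec n 0)) \<in> S"
    unfolding S_eq using unit_vnorm[of n] n by auto
  have bdd: "bdd_above S" using ub by (rule bdd_aboveI)
  show "num_radius n (\<lambda>u. ip u x \<cdot>\<^sub>v y) \<le> vnorm x * vnorm y"
    unfolding nr using ne ub by (intro cSup_least) auto
  show "(cmod (ip x y) + vnorm x * vnorm y) / 2 \<le> num_radius n (\<lambda>u. ip u x \<cdot>\<^sub>v y)"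
  proof (cases "vnorm x * vnorm y > 0")
    case True
    obtain f where f: "f \<in> carrier_vec n" "vnorm f = 1"
      "cmod (ip f x * ip y f) = (cmod (ip y x) + vnorm x * vnorm y) / 2"
      using rank_one_lower[OF x y True] by blast
    have "cmod (ip y x) = cmod (ip x y)" using ip_swap[OF x y] by simp
    then have "(cmod (ip x y) + vnorm x * vnorm y) / 2 \<in> S"
      unfolding S_eq using f by force
    then show ?thesis unfolding nr using bdd by (rule cSup_upper)
  next
    case False
    then have "vnorm x * vnorm y = 0" using vnorm_nonneg[of x] vnorm_nonneg[of y]
      by (simp add: zero_less_mult_iff)
    moreover have "cmod (ip x y) \<le> vnorm x * vnorm y" by (rule cauchy_schwarz[OF x y])
    ultimately have "(cmod (ip x y) + vnorm x * vnorm y) / 2 = 0"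
      using norm_ge_zero[of "ip x y"] by auto
    also have "0 \<le> Sup S"
      using cSup_upper[OF ne bdd] by (meson norm_ge_zero order_trans)
    finally show ?thesis unfolding nr .
  qed
qed

lemma ip_unit_left: "k < n \<Longrightarrow> g \<in> carrier_vec n \<Longrightarrow> ip (unit_vec n k) g = cnj (g $ k)"
proof -
  assume k: "k < n" and g: "g \<in> carrier_vec n"
  have "ip (unit_vec n k) g = (\<Sum>j<n. if j = k then cnj (g $ k) else 0)"
    unfolding ip_sum[OF g] by (rule sum.cong) (use k in auto)
  also have "\<dots> = cnj (g $ k)" using k by simp
  finally show ?thesis .
qed

lemma trace_dual:
  assumes F: "\<forall>i\<in>{1..N}. F i \<in> carrier_vec n" and D: "is_dual n N F G"
  shows "(\<Sum>i\<in>{1..N}. ip (F i) (G i)) = of_nat n"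
proof -
  have G: "\<forall>i\<in>{1..N}. G i \<in> carrier_vec n" using D unfolding is_dual_def by blast
  have rec: "\<forall>f\<in>carrier_vec n. f = finsum_vec TYPE(complex) n (\<lambda>i. ip f (G i) \<cdot>\<^sub>v F i) {1..N}"
    using D unfolding is_dual_def by blast
  have one: "(\<Sum>i\<in>{1..N}. F i $ k * cnj (G i $ k)) = 1" if k: "k < n" for k
  proof -
    have "1 = unit_vec n k $ k" using k by simp
    also have "\<dots> = finsum_vec TYPE(complex) n (\<lambda>i. ip (unit_vec n k) (G i) \<cdot>\<^sub>v F i) {1..N} $ k"
      using rec[rule_format, of "unit_vec n k"] by simp
    also have "\<dots> = (\<Sum>i\<in>{1..N}. ip (unit_vec n k) (G i) * F i $ k)"
      by (rule finsum_index) (use F k in auto)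
    also have "\<dots> = (\<Sum>i\<in>{1..N}. F i $ k * cnj (G i $ k))"
      by (rule sum.cong) (use G k in \<open>auto simp: ip_unit_left\<close>)
    finally show ?thesis by simp
  qed
  have "(\<Sum>i\<in>{1..N}. ip (F i) (G i)) = (\<Sum>i\<in>{1..N}. \<Sum>k<n. F i $ k * cnj (G i $ k))"
    by (rule sum.cong) (use G in \<open>auto simp: ip_sum\<close>)
  also have "\<dots> = (\<Sum>k<n. \<Sum>i\<in>{1..N}. F i $ k * cnj (G i $ k))" by (rule sum.swap)
  also have "\<dots> = (\<Sum>k<n. 1)" by (rule sum.cong) (simp_all add: one del: One_nat_def)
  finally show ?thesis by simp
qed

lemma Re_eq_cmod: "Re z = cmod z \<Longrightarrow> z = complex_of_real (cmod z)"
proof -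
  assume h: "Re z = cmod z"
  have "(cmod z)\<^sup>2 = (Re z)\<^sup>2 + (Im z)\<^sup>2" by (rule cmod_power2)
  then have "Im z = 0" using h by simp
  then show ?thesis using h by (simp add: complex_eq_iff)
qed

lemma real_core:
  fixes a b w :: "nat \<Rightarrow> real" and I :: "nat set" and q :: real
  assumes fin: "finite I" and nq: "real (card I) * q \<le> (\<Sum>i\<in>I. a i)"
    and ab: "\<And>i. i \<in> I \<Longrightarrow> a i \<le> b i"
    and wl: "\<And>i. i \<in> I \<Longrightarrow> (a i + b i) / 2 \<le> w i"
    and wq: "\<And>i. i \<in> I \<Longrightarrow> w i \<le> q"
  shows "\<forall>i\<in>I. a i = q \<and> b i = q"
proof -
  define e where "e i = q - (a i + b i) / 2" for i
  define d where "d i = b i - a i" for i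
  have e0: "\<And>i. i \<in> I \<Longrightarrow> e i \<ge> 0" unfolding e_def using wl wq by (meson diff_ge_0_iff_ge order_trans)
  have d0: "\<And>i. i \<in> I \<Longrightarrow> d i \<ge> 0" unfolding d_def using ab by simp
  have se: "(\<Sum>i\<in>I. e i) = real (card I) * q - (\<Sum>i\<in>I. a i) - (\<Sum>i\<in>I. d i) / 2"
    unfolding e_def d_def by (simp add: sum_subtractf sum.distrib sum_divide_distrib[symmetric] field_simps)
  have "(\<Sum>i\<in>I. e i) \<ge> 0" "(\<Sum>i\<in>I. d i) \<ge> 0" using e0 d0 by (auto intro: sum_nonneg)
  then have "(\<Sum>i\<in>I. e i) = 0" "(\<Sum>i\<in>I. d i) = 0" using se nq by linarith+
  then have "\<forall>i\<in>I. e i = 0" "\<forall>i\<in>I. d i = 0"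
    using sum_nonneg_eq_0_iff[OF fin, of e] sum_nonneg_eq_0_iff[OF fin, of d] e0 d0 by auto
  then show ?thesis unfolding e_def d_def by auto
qed

lemma pair_main:
  assumes n1: "1 \<le> n" and nN: "n \<le> N" and DP: "dual_pair n N F G"
  shows "eta1_FG n N F G \<ge> real n / real N"
    and "eta1_FG n N F G = real n / real N \<longleftrightarrow> (\<forall>i\<in>{1..N}. vnorm (F i) * vnorm (G i) = real n / real N)"
    and "eta1_FG n N F G = real n / real N \<Longrightarrow> (\<forall>i\<in>{1..N}. ip (F i) (G i) = complex_of_real (real n / real N))"
proof -
  define q where "q = real n / real N"
  define I where "I = {1..N}"
  have N0: "real N > 0" using n1 nN by simp
  have Nq: "real N * q = real n" unfolding q_def using N0 by simp
  have fin: "finite I" and cI: "card I = N" and neI: "I \<noteq> {}" unfolding I_def using n1 nN by auto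
  have Fc: "\<And>i. i \<in> I \<Longrightarrow> F i \<in> carrier_vec n" using DP unfolding dual_pair_def is_frame_def I_def by blast
  have Gc: "\<And>i. i \<in> I \<Longrightarrow> G i \<in> carrier_vec n" using DP unfolding dual_pair_def is_dual_def I_def by blast
  have Dd: "is_dual n N F G" using DP unfolding dual_pair_def by blast
  define a where "a i = cmod (ip (F i) (G i))" for i
  define b where "b i = vnorm (F i) * vnorm (G i)" for i
  define w where "w i = num_radius n (E_op n {i} F G)" for i
  have wE: "w i = num_radius n (\<lambda>u. ip u (F i) \<cdot>\<^sub>v G i)" if "i \<in> I" for i
  proof -
    have "E_op n {i} F G = (\<lambda>u. ip u (F i) \<cdot>\<^sub>v G i)"
      by (rule ext, rule E_single[where G=G and i=i]) (rule Gc[OF that])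
    then show ?thesis unfolding w_def by simp
  qed
  have wl: "(a i + b i) / 2 \<le> w i" if "i \<in> I" for i
    unfolding wE[OF that] a_def b_def by (rule num_radius_bounds(1)[OF n1 Fc[OF that] Gc[OF that]])
  have wu: "w i \<le> b i" if "i \<in> I" for i
    unfolding wE[OF that] a_def b_def by (rule num_radius_bounds(2)[OF n1 Fc[OF that] Gc[OF that]])
  have ab: "a i \<le> b i" if "i \<in> I" for i
    unfolding a_def b_def by (rule cauchy_schwarz[OF Fc[OF that] Gc[OF that]])
  have eta: "eta1_FG n N F G = Max (w ` I)"
  proof -
    have "{num_radius n (E_op n {i} F G) | i. i \<in> {1..N}} = w ` I" unfolding w_def I_def by blast
    then show ?thesis unfolding eta1_FG_def by simp
  qed
  have tr: "(\<Sum>i\<in>I. ip (F i) (G i)) = of_nat n"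
    unfolding I_def by (rule trace_dual) (use Fc Dd in \<open>auto simp: I_def\<close>)
  have suma: "real n \<le> (\<Sum>i\<in>I. a i)"
  proof -
    have "real n = cmod (\<Sum>i\<in>I. ip (F i) (G i))" unfolding tr by simp
    also have "\<dots> \<le> (\<Sum>i\<in>I. a i)" unfolding a_def by (rule norm_sum)
    finally show ?thesis .
  qed
  have wMax: "w i \<le> eta1_FG n N F G" if "i \<in> I" for i
    unfolding eta using fin that by simp
  have "real n \<le> (\<Sum>i\<in>I. w i)"
  proof -
    have "(\<Sum>i\<in>I. a i) \<le> (\<Sum>i\<in>I. w i)"
      by (rule sum_mono) (use wl ab in fastforce)
    then show ?thesis using suma by linarith
  qed
  also have "(\<Sum>i\<in>I. w i) \<le> real (card I) * eta1_FG n N F G"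
    by (rule sum_bounded_above) (rule wMax)
  finally have Neta: "real n \<le> real N * eta1_FG n N F G" unfolding cI .
  show lb: "eta1_FG n N F G \<ge> real n / real N"
    using Neta N0 by (simp add: divide_le_eq mult.commute)
  have fwd: "\<forall>i\<in>I. a i = q \<and> b i = q" if h: "eta1_FG n N F G = q"
  proof (rule real_core[OF fin _ ab wl])
    show "real (card I) * q \<le> sum a I" using suma Nq cI by simp
    show "\<And>i. i \<in> I \<Longrightarrow> w i \<le> q" using wMax h by simp
  qed
  show "eta1_FG n N F G = real n / real N \<longleftrightarrow> (\<forall>i\<in>{1..N}. vnorm (F i) * vnorm (G i) = real n / real N)"
  proof
    assume "eta1_FG n N F G = real n / real N"
    then show "\<forall>i\<in>{1..N}. vnorm (F i) * vnorm (G i) = real n / real N"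
      using fwd unfolding q_def b_def I_def by blast
  next
    assume h: "\<forall>i\<in>{1..N}. vnorm (F i) * vnorm (G i) = real n / real N"
    have "eta1_FG n N F G \<le> real n / real N"
      unfolding eta using fin neI wu h unfolding b_def I_def by fastforce
    then show "eta1_FG n N F G = real n / real N" using lb by simp
  qed
  assume h: "eta1_FG n N F G = real n / real N"
  have aq: "\<forall>i\<in>I. a i = q" using fwd h unfolding q_def by blast
  have sa: "(\<Sum>i\<in>I. a i) = real n" using aq Nq cI by simp
  have sr: "(\<Sum>i\<in>I. Re (ip (F i) (G i))) = real n"
    using arg_cong[OF tr, of Re] by (simp add: Re_sum)
  have "(\<Sum>i\<in>I. a i - Re (ip (F i) (G i))) = 0" using sa sr by (simp add: sum_subtractf)
  moreover have nn: "\<And>i. i \<in> I \<Longrightarrow> 0 \<le> a i - Re (ip (F i) (G i))"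
    unfolding a_def using complex_Re_le_cmod by (simp only: diff_ge_0_iff_ge)
  ultimately have "\<forall>i\<in>I. a i - Re (ip (F i) (G i)) = 0"
    using sum_nonneg_eq_0_iff[OF fin, of "\<lambda>i. a i - Re (ip (F i) (G i))", OF nn] by blast
  show "\<forall>i\<in>{1..N}. ip (F i) (G i) = complex_of_real (real n / real N)"
  proof
    fix i assume i: "i \<in> {1..N}"
    then have "Re (ip (F i) (G i)) = cmod (ip (F i) (G i))"
      using \<open>\<forall>i\<in>I. a i - Re (ip (F i) (G i)) = 0\<close> unfolding a_def I_def by simp
    then have "ip (F i) (G i) = complex_of_real (cmod (ip (F i) (G i)))" by (rule Re_eq_cmod)
    also have "cmod (ip (F i) (G i)) = q" using aq i unfolding a_def I_def by simp
    finally show "ip (F i) (G i) = complex_of_real (real n / real N)" unfolding q_def .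
  qed
qed

lemma dual_frame:
  assumes Fc: "\<forall>i\<in>{1..N}. F i \<in> carrier_vec n" and D: "is_dual n N F G"
  shows "is_frame n N F"
proof -
  define I where "I = {1..N}"
  have fin: "finite I" unfolding I_def by simp
  have Fc': "\<And>i. i \<in> I \<Longrightarrow> F i \<in> carrier_vec n" using Fc unfolding I_def by blast
  have Gc: "\<And>i. i \<in> I \<Longrightarrow> G i \<in> carrier_vec n" using D unfolding is_dual_def I_def by blast
  have rec: "\<And>f. f \<in> carrier_vec n \<Longrightarrow> f = finsum_vec TYPE(complex) n (\<lambda>i. ip f (G i) \<cdot>\<^sub>v F i) I"
    using D unfolding is_dual_def I_def by blast
  define K where "K = (\<Sum>i\<in>I. (vnorm (G i))\<^sup>2)"
  define M where "M = (\<Sum>i\<in>I. (vnorm (F i))\<^sup>2)"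
  define A where "A = 1 / (K + 1)"
  define B where "B = A + M"
  have K0: "K \<ge> 0" unfolding K_def by (simp add: sum_nonneg)
  have M0: "M \<ge> 0" unfolding M_def by (simp add: sum_nonneg)
  have A0: "A > 0" unfolding A_def using K0 by simp
  have AB: "A \<le> B" unfolding B_def using M0 by simp
  have bounds: "A * (vnorm f)\<^sup>2 \<le> (\<Sum>i\<in>I. (cmod (ip f (F i)))\<^sup>2) \<and>
        (\<Sum>i\<in>I. (cmod (ip f (F i)))\<^sup>2) \<le> B * (vnorm f)\<^sup>2" if f: "f \<in> carrier_vec n" for f
  proof
    define S where "S = (\<Sum>i\<in>I. (cmod (ip f (F i)))\<^sup>2)"
    have S0: "S \<ge> 0" unfolding S_def by (simp add: sum_nonneg)
    have vf0: "vnorm f \<ge> 0" by (rule vnorm_nonneg)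
    have "S \<le> (\<Sum>i\<in>I. (vnorm f)\<^sup>2 * (vnorm (F i))\<^sup>2)"
      unfolding S_def
    proof (rule sum_mono)
      fix i assume i: "i \<in> I"
      have "cmod (ip f (F i)) \<le> vnorm f * vnorm (F i)" by (rule cauchy_schwarz[OF f Fc'[OF i]])
      then have "(cmod (ip f (F i)))\<^sup>2 \<le> (vnorm f * vnorm (F i))\<^sup>2"
        by (rule power_mono) simp
      then show "(cmod (ip f (F i)))\<^sup>2 \<le> (vnorm f)\<^sup>2 * (vnorm (F i))\<^sup>2" by (simp add: power_mult_distrib)
    qed
    also have "\<dots> = (vnorm f)\<^sup>2 * M" unfolding M_def by (simp add: sum_distrib_left)
    also have "\<dots> \<le> B * (vnorm f)\<^sup>2" unfolding B_def using A0 by (simp add: algebra_simps)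
    finally show "S \<le> B * (vnorm f)\<^sup>2" .
    have "(vnorm f)\<^sup>2 = Re (ip f f)" using vnorm_eq_iff[OF f] by simp
    also have "ip f f = (\<Sum>i\<in>I. ip f (G i) * ip (F i) f)"
      by (subst (1) rec[OF f]) (rule ip_finsum[OF fin Fc' f])
    also have "Re \<dots> \<le> cmod \<dots>" by (rule complex_Re_le_cmod)
    also have "\<dots> \<le> (\<Sum>i\<in>I. cmod (ip f (G i) * ip (F i) f))" by (rule norm_sum)
    also have "\<dots> \<le> (\<Sum>i\<in>I. vnorm f * (\<bar>vnorm (G i)\<bar> * \<bar>cmod (ip f (F i))\<bar>))"
    proof (rule sum_mono)
      fix i assume i: "i \<in> I"
      have "cmod (ip f (G i) * ip (F i) f) = cmod (ip f (G i)) * cmod (ip f (F i))"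
        using ip_swap[OF f Fc'[OF i]] by (simp add: norm_mult)
      also have "\<dots> \<le> (vnorm f * vnorm (G i)) * cmod (ip f (F i))"
        by (rule mult_right_mono) (use cauchy_schwarz[OF f Gc[OF i]] in auto)
      finally show "cmod (ip f (G i) * ip (F i) f) \<le> vnorm f * (\<bar>vnorm (G i)\<bar> * \<bar>cmod (ip f (F i))\<bar>)"
        using vnorm_nonneg[of "G i"] by (simp add: mult.assoc)
    qed
    also have "\<dots> = vnorm f * (\<Sum>i\<in>I. \<bar>vnorm (G i)\<bar> * \<bar>cmod (ip f (F i))\<bar>)"
      by (simp add: sum_distrib_left)
    also have "\<dots> \<le> vnorm f * (L2_set (\<lambda>i. vnorm (G i)) I * L2_set (\<lambda>i. cmod (ip f (F i))) I)"
      by (rule mult_left_mono[OF L2_set_mult_ineq vf0])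
    also have "\<dots> = vnorm f * (sqrt K * sqrt S)" unfolding L2_set_def K_def S_def by simp
    finally have main: "(vnorm f)\<^sup>2 \<le> vnorm f * (sqrt K * sqrt S)" .
    have "(vnorm f)\<^sup>2 \<le> K * S"
    proof (cases "vnorm f = 0")
      case True then show ?thesis using K0 S0 by simp
    next
      case False
      then have "vnorm f > 0" using vf0 by simp
      then have "vnorm f \<le> sqrt K * sqrt S" using main by (simp add: power2_eq_square)
      then have "(vnorm f)\<^sup>2 \<le> (sqrt K * sqrt S)\<^sup>2" by (rule power_mono[OF _ vf0])
      then show ?thesis using K0 S0 by (simp add: power_mult_distrib)
    qed
    then have "A * (vnorm f)\<^sup>2 \<le> A * (K * S)" using A0 by simp
    also have "A * (K * S) \<le> S" unfolding A_def using K0 S0 by (simp add: field_simps)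
    finally show "A * (vnorm f)\<^sup>2 \<le> S" .
  qed
  show ?thesis unfolding is_frame_def
    using Fc A0 AB bounds unfolding I_def by blast
qed

lemma cis_ne_1:
  fixes d :: int
  assumes "d \<noteq> 0" "\<bar>d\<bar> < int N"
  shows "cis (2 * pi * real_of_int d / real N) \<noteq> 1"
proof
  assume h: "cis (2 * pi * real_of_int d / real N) = 1"
  then have "cos (2 * pi * real_of_int d / real N) = 1" using cis.sel(1)[of "2 * pi * real_of_int d / real N"] by simp
  then obtain m :: int where m: "2 * pi * real_of_int d / real N = real_of_int m * 2 * pi"
    using cos_one_2pi_int by blast
  have N0: "real N > 0" using assms by simp
  have "real_of_int d = real_of_int m * real N" using m N0 by (simp add: field_simps)
  then have dm: "d = m * int N" by (metis of_int_eq_iff of_int_mult of_int_of_nat_eq)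
  show False
  proof (cases "m = 0")
    case True then show False using dm assms by simp
  next
    case False
    then have "\<bar>m\<bar> \<ge> 1" by simp
    then have "\<bar>m\<bar> * int N \<ge> int N" using N0 by (simp add: mult_le_cancel_right1)
    then show False using dm assms by (simp add: abs_mult)
  qed
qed

lemma geo_sum_aux:
  fixes z :: complex
  shows "(z - 1) * (\<Sum>i\<in>{1..N}. z ^ i) = z ^ Suc N - z"
proof (induction N)
  case 0 then show ?case by simp
next
  case (Suc N)
  have "(\<Sum>i\<in>{1..Suc N}. z ^ i) = (\<Sum>i\<in>{1..N}. z ^ i) + z ^ Suc N" by simp
  then show ?case using Suc by (simp add: algebra_simps)
qed

lemma geo_sum_zero:
  fixes z :: complex
  assumes "z \<noteq> 1" "z ^ N = 1"
  shows "(\<Sum>i\<in>{1..N}. z ^ i) = 0"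
proof -
  have "(z - 1) * (\<Sum>i\<in>{1..N}. z ^ i) = 0" unfolding geo_sum_aux using assms(2) by simp
  then show ?thesis using assms(1) by simp
qed

lemma root_sum:
  assumes j: "j < N" and k: "k < N"
  shows "(\<Sum>i\<in>{1..N}. cis (2*pi*real i*real k/real N) * cnj (cis (2*pi*real i*real j/real N)))
         = (if j = k then of_nat N else 0)"
proof -
  define d :: int where "d = int k - int j"
  define z where "z = cis (2 * pi * real_of_int d / real N)"
  have N0: "real N > 0" using j by simp
  have eq: "cis (2*pi*real i*real k/real N) * cnj (cis (2*pi*real i*real j/real N)) = z ^ i" for i
    unfolding z_def d_def cis_cnj cis_mult DeMoivre
    by (rule arg_cong[where f=cis]) (use N0 in \<open>simp add: field_simps\<close>)
  show ?thesis
  proof (cases "j = k")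
    case True
    then have "z = 1" unfolding z_def d_def by simp
    then show ?thesis unfolding eq using True by simp
  next
    case False
    have d0: "d \<noteq> 0" unfolding d_def using False by simp
    have dN: "\<bar>d\<bar> < int N" unfolding d_def using j k by simp
    have z1: "z \<noteq> 1" unfolding z_def by (rule cis_ne_1[OF d0 dN])
    have "z ^ N = cis (2 * pi * real_of_int d)" unfolding z_def DeMoivre
      by (rule arg_cong[where f=cis]) (use N0 in \<open>simp add: field_simps\<close>)
    also have "\<dots> = 1" by (simp add: cis_multiple_2pi)
    finally have "z ^ N = 1" .
    then show ?thesis unfolding eq using False geo_sum_zero[OF z1] by simp
  qed
qed

definition dft :: "nat \<Rightarrow> nat \<Rightarrow> nat \<Rightarrow> complex vec" where
  "dft n N i = vec n (\<lambda>j. complex_of_real (1 / sqrt (real N)) * cis (2*pi*real i*real j/real N))"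

lemma dft_carrier: "dft n N i \<in> carrier_vec n"
  unfolding dft_def by simp

lemma dft_norm:
  assumes N0: "N > 0"
  shows "vnorm (dft n N i) * vnorm (dft n N i) = real n / real N"
proof -
  have "(\<Sum>j<n. (cmod (dft n N i $ j))\<^sup>2) = (\<Sum>j<n. 1 / real N)"
    by (rule sum.cong) (use N0 in \<open>auto simp: dft_def norm_mult norm_divide power2_eq_square\<close>)
  also have "\<dots> = real n / real N" by simp
  finally have "vnorm (dft n N i) = sqrt (real n / real N)"
    unfolding vnorm_L2[OF dft_carrier] L2_set_def by simp
  then show ?thesis by simp
qed

lemma dft_dual:
  assumes n1: "1 \<le> n" and nN: "n \<le> N"
  shows "is_dual n N (dft n N) (dft n N)"
  unfolding is_dual_def
proof (intro conjI ballI)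
  show "\<And>i. i \<in> {1..N} \<Longrightarrow> dft n N i \<in> carrier_vec n" by (rule dft_carrier)
  fix u :: "complex vec" assume u: "u \<in> carrier_vec n"
  define c where "c = complex_of_real (1 / sqrt (real N))"
  define e where "e i j = cis (2*pi*real i*real j/real N)" for i j :: nat
  have N0: "real N > 0" using n1 nN by simp
  have cc: "c * c * of_nat N = 1" unfolding c_def using N0
    by (simp flip: of_real_mult)
  have cnjc: "cnj c = c" unfolding c_def by simp
  have dij: "dft n N i $ j = c * e i j" if "j < n" for i j using that unfolding dft_def c_def e_def by simp
  have fc: "finsum_vec TYPE(complex) n (\<lambda>i. ip u (dft n N i) \<cdot>\<^sub>v dft n N i) {1..N} \<in> carrier_vec n"
    by (rule finsum_carrier) (rule dft_carrier)
  have comp: "finsum_vec TYPE(complex) n (\<lambda>i. ip u (dft n N i) \<cdot>\<^sub>v dft n N i) {1..N} $ k = u $ k"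
    if k: "k < n" for k
  proof -
    have "finsum_vec TYPE(complex) n (\<lambda>i. ip u (dft n N i) \<cdot>\<^sub>v dft n N i) {1..N} $ k
        = (\<Sum>i\<in>{1..N}. ip u (dft n N i) * dft n N i $ k)"
      by (rule finsum_index) (auto simp: k dft_carrier)
    also have "\<dots> = (\<Sum>i\<in>{1..N}. \<Sum>j<n. u $ j * (c * c) * (e i k * cnj (e i j)))"
      by (rule sum.cong) (simp_all add: ip_sum[OF dft_carrier] dij k sum_distrib_left cnjc algebra_simps)
    also have "\<dots> = (\<Sum>j<n. u $ j * (c * c) * (\<Sum>i\<in>{1..N}. e i k * cnj (e i j)))"
      by (subst sum.swap) (simp add: sum_distrib_left)
    also have "\<dots> = (\<Sum>j<n. u $ j * (c * c) * (if j = k then of_nat N else 0))"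
    proof (rule sum.cong)
      fix j assume "j \<in> {..<n}"
      then have jN: "j < N" and kN: "k < N" using k nN by auto
      have "(\<Sum>i\<in>{1..N}. e i k * cnj (e i j)) = (if j = k then of_nat N else 0)"
        unfolding e_def by (rule root_sum[OF jN kN])
      then show "u $ j * (c * c) * (\<Sum>i\<in>{1..N}. e i k * cnj (e i j)) =
          u $ j * (c * c) * (if j = k then of_nat N else 0)" by simp
    qed simp
    also have "\<dots> = u $ k * (c * c * of_nat N)" using k by (simp add: if_distrib cong: if_cong)
    finally show ?thesis using cc by simp
  qed
  show "u = finsum_vec TYPE(complex) n (\<lambda>i. ip u (dft n N i) \<cdot>\<^sub>v dft n N i) {1..N}"
    by (rule eq_vecI) (use u fc comp in auto)
qed
lemma eta1_value:
  assumes n1: "1 \<le> n" and nN: "n \<le> N"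
  shows "eta1 n N = real n / real N"
proof -
  have N0: "N > 0" using n1 nN by simp
  have dp: "dual_pair n N (dft n N) (dft n N)"
    unfolding dual_pair_def using dual_frame[OF _ dft_dual[OF n1 nN]] dft_dual[OF n1 nN] dft_carrier by blast
  have e: "eta1_FG n N (dft n N) (dft n N) = real n / real N"
    using pair_main(2)[OF n1 nN dp] dft_norm[OF N0] by blast
  show ?thesis unfolding eta1_def
  proof (rule cInf_eq_minimum)
    show "real n / real N \<in> {eta1_FG n N F G |F G. dual_pair n N F G}" using dp e by force
    show "\<And>x. x \<in> {eta1_FG n N F G |F G. dual_pair n N F G} \<Longrightarrow> real n / real N \<le> x"
      using pair_main(1)[OF n1 nN] by blast
  qed
qed

lemma N1_iff:
  assumes n1: "1 \<le> n" and nN: "n \<le> N" and dp: "dual_pair n N F G"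
  shows "(F, G) \<in> N1 n N \<longleftrightarrow> (\<forall>i\<in>{1..N}. vnorm (F i) * vnorm (G i) = real n / real N)"
  unfolding N1_def using dp eta1_value[OF n1 nN] pair_main(2)[OF n1 nN dp] by simp

definition cF :: "nat \<Rightarrow> complex vec" where
  "cF i = (if i = 1 then vec 2 (\<lambda>j. if j = 0 then 1 else 0) else vec 2 (\<lambda>j. 1))"
definition cG :: "nat \<Rightarrow> complex vec" where
  "cG i = (if i = 1 then vec 2 (\<lambda>j. if j = 0 then 1 else -1) else vec 2 (\<lambda>j. if j = 0 then 0 else 1))"

lemma cF_carrier: "cF i \<in> carrier_vec 2" unfolding cF_def by simp
lemma cG_carrier: "cG i \<in> carrier_vec 2" unfolding cG_def by simp

lemma sum2: "(\<Sum>j<(2::nat). f j) = f 0 + (f 1 :: complex)"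
  by (simp add: numeral_2_eq_2)

lemma sum12: "(\<Sum>i\<in>{1..2::nat}. f i) = f 1 + (f 2 :: complex)"
proof -
  have "{1..2::nat} = {1, 2}" by auto
  then show ?thesis by simp
qed

lemma c_dual: "is_dual 2 2 cF cG"
  unfolding is_dual_def
proof (intro conjI ballI)
  show "\<And>i. i \<in> {1..2} \<Longrightarrow> cG i \<in> carrier_vec 2" by (rule cG_carrier)
  fix u :: "complex vec" assume u: "u \<in> carrier_vec 2"
  have fc: "finsum_vec TYPE(complex) 2 (\<lambda>i. ip u (cG i) \<cdot>\<^sub>v cF i) {1..2} \<in> carrier_vec 2"
    by (rule finsum_carrier) (rule cF_carrier)
  have i1: "ip u (cG 1) = u $ 0 - u $ 1" unfolding ip_sum[OF cG_carrier] sum2 by (simp add: cG_def)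
  have i2: "ip u (cG 2) = u $ 1" unfolding ip_sum[OF cG_carrier] sum2 by (simp add: cG_def)
  have comp: "finsum_vec TYPE(complex) 2 (\<lambda>i. ip u (cG i) \<cdot>\<^sub>v cF i) {1..2} $ k = u $ k"
    if k: "k < 2" for k
  proof -
    have "finsum_vec TYPE(complex) 2 (\<lambda>i. ip u (cG i) \<cdot>\<^sub>v cF i) {1..2} $ k
        = (\<Sum>i\<in>{1..2}. ip u (cG i) * cF i $ k)"
      by (rule finsum_index) (auto simp: k cF_carrier)
    also have "\<dots> = u $ k" unfolding sum12 i1 i2 using k
      by (cases k) (auto simp: cF_def)
    finally show ?thesis .
  qed
  show "u = finsum_vec TYPE(complex) 2 (\<lambda>i. ip u (cG i) \<cdot>\<^sub>v cF i) {1..2}"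
    by (rule eq_vecI) (use u fc comp in auto)
qed

lemma c_pair: "dual_pair 2 2 cF cG"
  unfolding dual_pair_def using dual_frame[OF _ c_dual] c_dual cF_carrier by blast

lemma c_ip: "\<forall>i\<in>{1..2}. ip (cF i) (cG i) = complex_of_real (real 2 / real 2)"
proof
  fix i :: nat assume "i \<in> {1..2}"
  then have "i = 1 \<or> i = 2" by auto
  then show "ip (cF i) (cG i) = complex_of_real (real 2 / real 2)"
    unfolding ip_sum[OF cG_carrier] sum2 by (auto simp: cF_def cG_def)
qed

lemma c_not: "(cF, cG) \<notin> N1 2 2"
proof
  assume "(cF, cG) \<in> N1 2 2"
  then have "vnorm (cF 1) * vnorm (cG 1) = 1" using N1_iff[OF _ _ c_pair] by simp
  moreover have "vnorm (cF 1) = 1" unfolding vnorm_def ip_sum[OF cF_carrier] sum2 by (simp add: cF_def)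
  moreover have "vnorm (cG 1) = sqrt 2" unfolding vnorm_def ip_sum[OF cG_carrier] sum2 by (simp add: cG_def)
  ultimately show False by simp
qed

theorem theorem5p1:
  fixes n N :: nat
  assumes "1 \<le> n" and "n \<le> N"
  shows "eta1 n N = real n / real N \<and>
    (\<forall>F G. dual_pair n N F G \<longrightarrow>
       (((F, G) \<in> N1 n N \<longleftrightarrow>
           (\<forall>i\<in>{1..N}. vnorm (F i) * vnorm (G i) = real n / real N)) \<and>
        ((F, G) \<in> N1 n N \<longrightarrow>
           (\<forall>i\<in>{1..N}. ip (F i) (G i) = complex_of_real (real n / real N))))) \<and>
    (\<exists>n' N' F G. 1 \<le> n' \<and> n' \<le> N' \<and> dual_pair n' N' F G \<and>
       (\<forall>i\<in>{1..N'}. ip (F i) (G i) = complex_of_real (real n' / real N')) \<and>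
       (F, G) \<notin> N1 n' N')"
proof (intro conjI allI impI)
  show "eta1 n N = real n / real N" by (rule eta1_value[OF assms])
  fix F G assume dp: "dual_pair n N F G"
  show "(F, G) \<in> N1 n N \<longleftrightarrow> (\<forall>i\<in>{1..N}. vnorm (F i) * vnorm (G i) = real n / real N)"
    by (rule N1_iff[OF assms dp])
  assume "(F, G) \<in> N1 n N"
  then have "eta1_FG n N F G = real n / real N"
    unfolding N1_def using eta1_value[OF assms] by simp
  then show "\<forall>i\<in>{1..N}. ip (F i) (G i) = complex_of_real (real n / real N)"
    by (rule pair_main(3)[OF assms dp])
next
  show "\<exists>n' N' F G. 1 \<le> n' \<and> n' \<le> N' \<and> dual_pair n' N' F G \<and>
       (\<forall>i\<in>{1..N'}. ip (F i) (G i) = complex_of_real (real n' / real N')) \<and>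
       (F, G) \<notin> N1 n' N'"
    using c_pair c_ip c_not by (intro exI[of _ 2] exI[of _ cF] exI[of _ cG]) auto
qed

end
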